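(* Let $n\ge3$ be an even integer. Then the number of edges of $OD(\mathcal{D}_n)$ is $$|E(OD(\mathcal{D}_n))|=\frac12\Big(2n-1+(n+1)\sum_{\lambda\mid\frac n2}\phi(2\lambda)+\sum_{\substack{m\mid n,\ m>1\\ m\text{ odd}}}\Big(m-2\phi(m)+\sum_{\lambda\mid\frac nm}\phi(\lambda m)\Big)\phi(m)+\sum_{\substack{m\mid n,\ m>2\\ m\text{ even}}}\Big(n+m-2\phi(m)+\sum_{\lambda\mid\frac nm}\phi(\lambda m)\Big)\phi(m)\Big),$$ where $\phi$ is Euler's totient function.
   Context: The dihedral group $\mathcal{D}_n$ ($n\ge3$) is the group $\langle a,b\mid a^n=b^2=(ab)^2=e\rangle$ of order $2n$. For a finite group $G$, $o(x)$ denotes the order of $x\in G$. The order-divisor graph $OD(G)$ is the simple undirected graph with vertex set $G$, in which two distinct vertices $x,y$ are adjacent if and only if $o(x)\neq o(y)$ and either $o(x)\mid o(y)$ or $o(y)\mid o(x)$. *)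

theory Defs
  imports "HOL-Algebra.Algebra" "HOL-Number_Theory.Number_Theory"
begin

text \<open>Concrete model of the dihedral group D_n of order 2n:
  (False, k) represents a^k and (True, k) represents a^k b, for 0 \<le> k < n.
  Multiplication follows from a^n = b^2 = (ab)^2 = e, i.e. b a^j = a^(-j) b.\<close>

definition dihedral_mult :: "nat \<Rightarrow> bool \<times> nat \<Rightarrow> bool \<times> nat \<Rightarrow> bool \<times> nat" where
  "dihedral_mult n x y =
     (case x of (s, i) \<Rightarrow> case y of (t, j) \<Rightarrow>
        if \<not> s then (t, (i + j) mod n)
        else (\<not> t, (i + n - j) mod n))"

definition dihedral :: "nat \<Rightarrow> (bool \<times> nat) monoid" where
  "dihedral n = \<lparr> carrier = UNIV \<times> {0..<n},
                   monoid.mult = dihedral_mult n,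
                   one = (False, 0) \<rparr>"

definition od_adj :: "('a, 'b) monoid_scheme \<Rightarrow> 'a \<Rightarrow> 'a \<Rightarrow> bool" where
  "od_adj G x y \<longleftrightarrow> x \<noteq> y \<and> group.ord G x \<noteq> group.ord G y \<and>
     (group.ord G x dvd group.ord G y \<or> group.ord G y dvd group.ord G x)"

definition od_edges :: "('a, 'b) monoid_scheme \<Rightarrow> 'a set set" where
  "od_edges G = {{x, y} | x y. x \<in> carrier G \<and> y \<in> carrier G \<and> od_adj G x y}"

end

theory Submission
  imports Defs
begin

lemma modeq_int: "(a::nat) mod n = b mod n \<longleftrightarrow> int a mod int n = int b mod int n"
  by (metis of_nat_mod of_nat_eq_iff)

lemma hsub: "0 < n \<Longrightarrow> int (a + n - b mod n) = int a + int n - int b mod int n"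
  by (simp add: of_nat_diff zmod_int le_trans[OF less_imp_le[OF mod_less_divisor]] add_increasing)

lemma dm_assoc:
  assumes "i < n" "j < n" "k < n"
  shows "dihedral_mult n (dihedral_mult n (s,i) (t,j)) (u,k) = dihedral_mult n (s,i) (dihedral_mult n (t,j) (u,k))"
proof -
  have n: "0 < n" using assms by auto
  show ?thesis
  using assms
  apply (cases s; cases t; cases u)
  apply (simp_all add: dihedral_mult_def modeq_int hsub[OF n] of_nat_diff)
  apply (simp_all add: of_nat_mod of_nat_diff)
  apply (simp_all add: mod_simps)
  apply (simp_all only: add_diff_eq[symmetric])
  apply (simp_all add: mod_simps)
  apply (simp_all add: mod_eq_dvd_iff algebra_simps)
  done
qed

lemma group_dihedral:
  assumes n: "0 < n"
  shows "group (dihedral n)"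
proof (rule groupI)
  fix x y assume "x \<in> carrier (dihedral n)" "y \<in> carrier (dihedral n)"
  then show "x \<otimes>\<^bsub>dihedral n\<^esub> y \<in> carrier (dihedral n)"
    using n by (auto simp: dihedral_def dihedral_mult_def split: prod.splits)
next
  show "\<one>\<^bsub>dihedral n\<^esub> \<in> carrier (dihedral n)" using n by (simp add: dihedral_def)
next
  fix x y z assume "x \<in> carrier (dihedral n)" "y \<in> carrier (dihedral n)" "z \<in> carrier (dihedral n)"
  then show "x \<otimes>\<^bsub>dihedral n\<^esub> y \<otimes>\<^bsub>dihedral n\<^esub> z =
    x \<otimes>\<^bsub>dihedral n\<^esub> (y \<otimes>\<^bsub>dihedral n\<^esub> z)"
    by (cases x; cases y; cases z) (simp add: dihedral_def dm_assoc)
next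
  fix x assume "x \<in> carrier (dihedral n)"
  then show "\<one>\<^bsub>dihedral n\<^esub> \<otimes>\<^bsub>dihedral n\<^esub> x = x"
    by (cases x) (simp add: dihedral_def dihedral_mult_def)
next
  fix x assume x: "x \<in> carrier (dihedral n)"
  then obtain b i where xi: "x = (b,i)" "i < n" by (cases x) (auto simp: dihedral_def)
  show "\<exists>y\<in>carrier (dihedral n). y \<otimes>\<^bsub>dihedral n\<^esub> x = \<one>\<^bsub>dihedral n\<^esub>"
  proof (cases b)
    case True
    then show ?thesis using xi
      by (intro bexI[of _ "(True,i)"]) (auto simp: dihedral_def dihedral_mult_def)
  next
    case False
    then show ?thesis using xi n
      by (intro bexI[of _ "(False,(n-i) mod n)"]) (auto simp: dihedral_def dihedral_mult_def mod_add_left_eq)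
  qed
qed

lemma one_dihedral: "\<one>\<^bsub>dihedral n\<^esub> = (False,0)" by (simp add: dihedral_def)

lemma pow_rot:
  assumes "n > 0" "k < n"
  shows "(False, k) [^]\<^bsub>dihedral n\<^esub> (m::nat) = (False, (k*m) mod n)"
proof (induction m)
  case 0 then show ?case by (simp add: dihedral_def)
next
  case (Suc m)
  have "(False, k) [^]\<^bsub>dihedral n\<^esub> Suc m = dihedral_mult n (False, (k*m) mod n) (False, k)"
    by (simp only: nat_pow_Suc Suc) (simp add: dihedral_def)
  also have "\<dots> = (False, (k * Suc m) mod n)"
    by (simp add: dihedral_mult_def mod_add_right_eq add.commute)
  finally show ?case .
qed

lemma pow_ref:
  assumes "n > 0" "k < n"
  shows "(True, k) [^]\<^bsub>dihedral n\<^esub> (m::nat) = (if even m then (False, 0) else (True, k))"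
proof (induction m)
  case 0 then show ?case by (simp add: dihedral_def)
next
  case (Suc m)
  have "(True, k) [^]\<^bsub>dihedral n\<^esub> Suc m = dihedral_mult n (if even m then (False, 0) else (True, k)) (True, k)"
    by (simp only: nat_pow_Suc Suc) (simp add: dihedral_def)
  also have "\<dots> = (if even (Suc m) then (False, 0) else (True, k))"
    using assms by (simp add: dihedral_mult_def)
  finally show ?case .
qed

lemma dvd_gcd_aux:
  assumes n: "0 < (n::nat)"
  shows "n dvd k * m \<longleftrightarrow> n div gcd n k dvd m"
proof -
  define g where "g = gcd n k"
  have g0: "g > 0" using n by (simp add: g_def)
  define a where "a = n div g"
  define b where "b = k div g"
  have na: "n = g * a" unfolding a_def g_def by simp
  have kb: "k = g * b" unfolding b_def g_def by simp
  have cop: "coprime a b" unfolding a_def b_def g_def using n by (intro div_gcd_coprime) auto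
  have "n dvd k * m \<longleftrightarrow> g * a dvd g * (b * m)" using na kb by (simp add: mult.assoc)
  also have "\<dots> \<longleftrightarrow> a dvd b * m" using g0 by simp
  also have "\<dots> \<longleftrightarrow> a dvd m" using cop by (simp add: coprime_dvd_mult_right_iff)
  finally show ?thesis unfolding a_def g_def .
qed

definition oD :: "nat \<Rightarrow> bool \<times> nat \<Rightarrow> nat" where
  "oD n x = (if fst x then 2 else n div gcd n (snd x))"

lemma ord_dihedral:
  assumes n: "n > 0" and xc: "x \<in> carrier (dihedral n)"
  shows "group.ord (dihedral n) x = oD n x"
proof -
  interpret group "dihedral n" by (rule group_dihedral[OF n])
  obtain b k where x: "x = (b,k)" and k: "k < n" using xc by (cases x) (auto simp: dihedral_def)
  show ?thesis
  proof (cases b)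
    case True
    then have xt: "x = (True,k)" using x by simp
    show ?thesis using xc unfolding xt oD_def
      by (subst ord_unique) (simp_all add: pow_ref[OF n k] one_dihedral)
  next
    case False
    have key: "(k*m) mod n = 0 \<longleftrightarrow> n div gcd n k dvd m" for m
    proof -
      have "(k*m) mod n = 0 \<longleftrightarrow> n dvd k * m" by auto
      also have "\<dots> \<longleftrightarrow> n div gcd n k dvd m"
        by (rule dvd_gcd_aux[OF n])
      finally show ?thesis .
    qed
    from False have xt: "x = (False,k)" using x by simp
    show ?thesis using xc unfolding xt oD_def
      by (subst ord_unique) (simp_all add: pow_rot[OF n k] one_dihedral key)
  qed
qed



lemma edges_double:
  assumes fin: "finite V" and sym: "\<And>x y. A x y \<Longrightarrow> A y x" and irr: "\<And>x. \<not> A x x"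
  shows "2 * card {{x,y} | x y. x \<in> V \<and> y \<in> V \<and> A x y} = (\<Sum>x\<in>V. card {y\<in>V. A x y})"
proof -
  define P where "P = Sigma V (\<lambda>x. {y\<in>V. A x y})"
  define f where "f = (\<lambda>p::'a\<times>'a. {fst p, snd p})"
  define E where "E = {{x,y} | x y. x \<in> V \<and> y \<in> V \<and> A x y}"
  have finP: "finite P" unfolding P_def using fin by auto
  have cP: "card P = (\<Sum>x\<in>V. card {y\<in>V. A x y})"
    unfolding P_def using fin by (subst card_SigmaI) auto
  have EP: "E = f ` P"
  proof
    show "E \<subseteq> f ` P"
    proof
      fix e assume "e \<in> E"
      then obtain x y where "e = {x,y}" "x \<in> V" "y \<in> V" "A x y" unfolding E_def by auto
      then show "e \<in> f ` P" unfolding P_def f_def by (intro image_eqI[of _ _ "(x,y)"]) auto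
    qed
    show "f ` P \<subseteq> E"
    proof
      fix e assume "e \<in> f ` P"
      then obtain x y where "(x,y) \<in> P" "e = f (x,y)" by auto
      then show "e \<in> E" unfolding E_def P_def f_def by auto
    qed
  qed
  have fib: "card {p\<in>P. f p = e} = 2" if "e \<in> E" for e
  proof -
    from that obtain x y where e: "e = {x,y}" and xy: "x \<in> V" "y \<in> V" "A x y" unfolding E_def by auto
    have "x \<noteq> y" using xy irr by auto
    have "{p\<in>P. f p = e} = {(x,y),(y,x)}"
    proof (rule equalityI; rule subsetI)
      fix p assume "p \<in> {p\<in>P. f p = e}"
      then obtain a b where p: "p = (a,b)" "{a,b} = {x,y}" unfolding f_def e by (cases p) auto
      then show "p \<in> {(x,y),(y,x)}" by (auto simp: doubleton_eq_iff)
    next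
      fix p assume "p \<in> {(x,y),(y,x)}"
      then show "p \<in> {p\<in>P. f p = e}" using xy sym unfolding P_def f_def e by auto
    qed
    then show ?thesis using \<open>x \<noteq> y\<close> by simp
  qed
  have "card P = (\<Sum>p\<in>P. 1)" by simp
  also have "\<dots> = (\<Sum>e\<in>E. \<Sum>p\<in>{p\<in>P. f p = e}. 1)"
    by (rule sum.group[symmetric]) (use finP EP in auto)
  also have "\<dots> = (\<Sum>e\<in>E. 2)" using fib by (intro sum.cong) auto
  also have "\<dots> = 2 * card E" by simp
  finally show ?thesis using cP unfolding E_def by simp
qed




definition VV :: "nat \<Rightarrow> (bool \<times> nat) set" where "VV n = UNIV \<times> {0..<n}"
definition cnt where "cnt n d = card {x\<in>VV n. oD n x = d}"
definition odeg where "odeg n d = card {y\<in>VV n. oD n y \<noteq> d \<and> (oD n y dvd d \<or> d dvd oD n y)}"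

lemma carrier_dihedral: "carrier (dihedral n) = VV n" by (simp add: dihedral_def VV_def)
lemma finite_VV[simp]: "finite (VV n)" by (simp add: VV_def)
lemma card_VV: "card (VV n) = 2*n" by (simp add: VV_def card_cartesian_product)

lemma oD_dvd: "even n \<Longrightarrow> x \<in> VV n \<Longrightarrow> oD n x dvd n"
  by (auto simp: oD_def VV_def) (metis dvd_div_mult_self gcd_dvd1 dvd_triv_left)

lemma ddiv: "0 < n \<Longrightarrow> d dvd n \<Longrightarrow> n div (n div (d::nat)) = d"
  by (auto elim!: dvdE)

lemma div_eq_iff_aux:
  assumes "0 < (n::nat)" "g dvd n" "d dvd n"
  shows "n div g = d \<longleftrightarrow> g = n div d"
  using assms ddiv by metis

lemma R_card:
  assumes n: "0 < n" and d: "d dvd n"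
  shows "card {k\<in>{0..<n}. n div gcd n k = d} = totient d"
proof -
  define h where "h = (\<lambda>k::nat. if k = 0 then n else k)"
  have inj: "inj_on h {k\<in>{0..<n}. n div gcd n k = d}"
    unfolding h_def inj_on_def by auto
  have img: "h ` {k\<in>{0..<n}. n div gcd n k = d} = {k\<in>{0<..n}. gcd k n = n div d}"
  proof (rule equalityI; rule subsetI)
    fix k assume "k \<in> h ` {k\<in>{0..<n}. n div gcd n k = d}"
    then obtain j where j: "j < n" "n div gcd n j = d" "k = h j" by auto
    then have "gcd n j = n div d" using div_eq_iff_aux[OF n _ d, of "gcd n j"] by simp
    then show "k \<in> {k\<in>{0<..n}. gcd k n = n div d}" using j n
      by (auto simp: h_def gcd.commute)
  next
    fix k assume k: "k \<in> {k\<in>{0<..n}. gcd k n = n div d}"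
    show "k \<in> h ` {k\<in>{0..<n}. n div gcd n k = d}"
    proof (cases "k = n")
      case True
      have "n div d = n" using k True by simp
      then have "d = 1" using ddiv[OF n d] n by simp
      then have "n div gcd n 0 = d" using n by simp
      then show ?thesis using True n by (intro image_eqI[of _ _ 0]) (auto simp: h_def)
    next
      case False
      have "n div gcd n k = d" using k ddiv[OF n d] by (simp add: gcd.commute)
      then show ?thesis using False k by (intro image_eqI[of _ _ k]) (auto simp: h_def)
    qed
  qed
  have "card {k\<in>{0..<n}. n div gcd n k = d} = card {k\<in>{0<..n}. gcd k n = n div d}"
    using card_image[OF inj] img by simp
  also have "\<dots> = totient (n div (n div d))"
    by (rule card_gcd_eq_totient[OF n]) (use d in auto)
  also have "n div (n div d) = d" using n d by (simp add: ddiv)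
  finally show ?thesis .
qed

lemma cnt_eq:
  assumes n: "0 < n" and d: "d dvd n"
  shows "cnt n d = totient d + (if d = 2 then n else 0)"
proof -
  have eq: "{x\<in>VV n. oD n x = d} = (if d = 2 then {True} \<times> {0..<n} else {}) \<union> Pair False ` {k\<in>{0..<n}. n div gcd n k = d}"
    by (auto simp: VV_def oD_def)
  have "card {x\<in>VV n. oD n x = d} = card (if d = 2 then {True} \<times> {0..<n} else ({}::(bool\<times>nat) set)) + card (Pair False ` {k\<in>{0..<n}. n div gcd n k = d})"
    unfolding eq by (rule card_Un_disjoint) auto
  also have "card (Pair False ` {k\<in>{0..<n}. n div gcd n k = d}) = totient d"
    using R_card[OF n d] by (subst card_image) (auto simp: inj_on_def)
  finally show ?thesis unfolding cnt_def by (simp add: card_cartesian_product)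
qed

lemma sum_cnt:
  assumes n: "0 < n" and ev: "even n"
  shows "(\<Sum>d\<in>{d. d dvd n}. cnt n d) = 2*n"
proof -
  have "(\<Sum>d\<in>{d. d dvd n}. cnt n d) = (\<Sum>d\<in>{d. d dvd n}. \<Sum>x\<in>{x\<in>VV n. oD n x = d}. 1)"
    by (simp add: cnt_def)
  also have "\<dots> = (\<Sum>x\<in>VV n. 1)"
    by (rule sum.group) (use n oD_dvd[OF ev] in auto)
  finally show ?thesis by (simp add: card_VV)
qed

lemma odeg_sum:
  assumes n: "0 < n" and ev: "even n"
  shows "odeg n d = (\<Sum>e\<in>{e. e dvd n \<and> e \<noteq> d \<and> (e dvd d \<or> d dvd e)}. cnt n e)"
proof -
  define S where "S = {y\<in>VV n. oD n y \<noteq> d \<and> (oD n y dvd d \<or> d dvd oD n y)}"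
  have fE: "finite {e. e dvd n \<and> e \<noteq> d \<and> (e dvd d \<or> d dvd e)}"
    using n by (auto intro: finite_subset[OF _ finite_divisors_nat[of n]])
  have "odeg n d = (\<Sum>y\<in>S. 1)" by (simp add: odeg_def S_def)
  also have "\<dots> = (\<Sum>e\<in>{e. e dvd n \<and> e \<noteq> d \<and> (e dvd d \<or> d dvd e)}. \<Sum>y\<in>{y\<in>S. oD n y = e}. 1)"
    by (rule sum.group[symmetric]) (use fE oD_dvd[OF ev] in \<open>auto simp: S_def\<close>)
  also have "\<dots> = (\<Sum>e\<in>{e. e dvd n \<and> e \<noteq> d \<and> (e dvd d \<or> d dvd e)}. cnt n e)"
  proof (rule sum.cong[OF refl])
    fix e assume "e \<in> {e. e dvd n \<and> e \<noteq> d \<and> (e dvd d \<or> d dvd e)}"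
    then have "{y\<in>S. oD n y = e} = {x\<in>VV n. oD n x = e}" by (auto simp: S_def)
    then show "(\<Sum>y\<in>{y\<in>S. oD n y = e}. 1) = cnt n e" by (simp add: cnt_def)
  qed
  finally show ?thesis .
qed




lemma ord_dihedral': "0 < n \<Longrightarrow> x \<in> VV n \<Longrightarrow> group.ord (dihedral n) x = oD n x"
  using ord_dihedral carrier_dihedral by metis

lemma edges_sum:
  assumes n: "0 < n" and ev: "even n"
  shows "2 * card (od_edges (dihedral n)) = (\<Sum>d\<in>{d. d dvd n}. cnt n d * odeg n d)"
proof -
  define A where "A = (\<lambda>x y. x \<noteq> y \<and> oD n x \<noteq> oD n y \<and> (oD n x dvd oD n y \<or> oD n y dvd oD n x))"
  have E: "od_edges (dihedral n) = {{x,y} | x y. x \<in> VV n \<and> y \<in> VV n \<and> A x y}"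
    unfolding od_edges_def carrier_dihedral
  proof (rule Collect_cong)
    have adj: "\<And>x y. x\<in>VV n \<Longrightarrow> y\<in>VV n \<Longrightarrow> od_adj (dihedral n) x y \<longleftrightarrow> A x y"
      by (simp add: od_adj_def A_def ord_dihedral'[OF n])
    fix v show "(\<exists>x y. v = {x,y} \<and> x\<in>VV n \<and> y\<in>VV n \<and> od_adj (dihedral n) x y) \<longleftrightarrow>
      (\<exists>x y. v = {x,y} \<and> x\<in>VV n \<and> y\<in>VV n \<and> A x y)"
      using adj by blast
  qed
  have "2 * card (od_edges (dihedral n)) = (\<Sum>x\<in>VV n. card {y\<in>VV n. A x y})"
    unfolding E by (rule edges_double) (auto simp: A_def)
  also have "\<dots> = (\<Sum>x\<in>VV n. odeg n (oD n x))"
  proof (rule sum.cong[OF refl])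
    fix x assume "x \<in> VV n"
    have "{y\<in>VV n. A x y} = {y\<in>VV n. oD n y \<noteq> oD n x \<and> (oD n y dvd oD n x \<or> oD n x dvd oD n y)}"
      unfolding A_def by auto
    then show "card {y\<in>VV n. A x y} = odeg n (oD n x)" by (simp add: odeg_def)
  qed
  also have "\<dots> = (\<Sum>d\<in>{d. d dvd n}. \<Sum>x\<in>{x\<in>VV n. oD n x = d}. odeg n (oD n x))"
    by (rule sum.group[symmetric]) (use n oD_dvd[OF ev] in auto)
  also have "\<dots> = (\<Sum>d\<in>{d. d dvd n}. cnt n d * odeg n d)"
    by (rule sum.cong[OF refl]) (simp add: cnt_def)
  finally show ?thesis .
qed

lemma reidx:
  fixes n m :: nat
  assumes n: "0 < n" and m: "m dvd n" "0 < m"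
  shows "(\<Sum>l\<in>{l. l dvd n div m}. f (l*m)) = (\<Sum>e\<in>{e. e dvd n \<and> m dvd e}. f e)"
proof (rule sum.reindex_bij_witness[of _ "\<lambda>e. e div m" "\<lambda>l. l*m"])
  fix l assume "l \<in> {l. l dvd n div m}"
  then have l: "l dvd n div m" by simp
  show "l * m div m = l" using m(2) by (simp add: nonzero_mult_div_cancel_right)
  have "l * m dvd (n div m) * m" using l by (rule mult_dvd_mono) simp
  then show "l * m \<in> {e. e dvd n \<and> m dvd e}" using m by simp
next
  fix e assume "e \<in> {e. e dvd n \<and> m dvd e}"
  then show "e div m * m = e" "e div m \<in> {l. l dvd n div m}"
    using m by (auto simp: div_dvd_div)
qed simp

lemma fin_div[simp]: "0 < n \<Longrightarrow> finite {e. e dvd (n::nat) \<and> P e}"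
  by (rule finite_subset[OF _ finite_divisors_nat[of n]]) auto

lemma dvd2: "(e::nat) dvd 2 \<Longrightarrow> e = 1 \<or> e = 2"
proof -
  assume e: "e dvd 2"
  then have "e \<le> 2" by (rule dvd_imp_le) simp
  moreover have "e \<noteq> 0" proof assume "e = 0" then show False using e by simp qed
  ultimately show ?thesis by arith
qed

lemma deg1:
  assumes n: "0 < n" and ev: "even n"
  shows "odeg n 1 = 2*n - 1"
proof -
  have "{e. e dvd n \<and> e \<noteq> 1 \<and> (e dvd 1 \<or> 1 dvd e)} = {e. e dvd n} - {1}" by auto
  then have "odeg n 1 = (\<Sum>e\<in>{e. e dvd n} - {1}. cnt n e)" using odeg_sum[OF n ev] by simp
  also have "\<dots> = (\<Sum>e\<in>{e. e dvd n}. cnt n e) - cnt n 1"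
    using n by (subst sum_diff1_nat) (auto simp: finite_divisors_nat)
  also have "\<dots> = 2*n - 1" using sum_cnt[OF n ev] cnt_eq[OF n, of 1] by simp
  finally show ?thesis .
qed

lemma deg2:
  assumes n: "0 < n" and ev: "even n"
  shows "odeg n 2 = (\<Sum>l\<in>{l. l dvd n div 2}. totient (2*l))"
proof -
  define M where "M = {e. e dvd n \<and> 2 dvd e}"
  have fM: "finite M" unfolding M_def using n by simp
  have "{e. e dvd n \<and> e \<noteq> 2 \<and> (e dvd 2 \<or> 2 dvd e)} = insert 1 (M - {2})"
    unfolding M_def by (auto dest: dvd2)
  then have "odeg n 2 = (\<Sum>e\<in>insert 1 (M - {2}). cnt n e)" using odeg_sum[OF n ev] by simp
  also have "\<dots> = cnt n 1 + (\<Sum>e\<in>M - {2}. cnt n e)"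
    using fM by (subst sum.insert) (auto simp: M_def)
  finally have a1: "odeg n 2 = cnt n 1 + (\<Sum>e\<in>M - {2}. cnt n e)" .
  have a2: "(\<Sum>e\<in>M - {2}. cnt n e) + cnt n 2 = (\<Sum>e\<in>M. cnt n e)"
    using fM ev by (subst sum.remove[of M 2]) (auto simp: M_def)
  have "(\<Sum>e\<in>M. cnt n e) = (\<Sum>e\<in>M. totient e + (if e = 2 then n else 0))"
    using n by (intro sum.cong refl cnt_eq[OF n]) (auto simp: M_def)
  also have "\<dots> = (\<Sum>e\<in>M. totient e) + n"
    using fM ev by (simp add: sum.distrib M_def)
  finally have a3: "(\<Sum>e\<in>M. cnt n e) = (\<Sum>e\<in>M. totient e) + n" .
  have *: "odeg n 2 + cnt n 2 = cnt n 1 + (\<Sum>e\<in>M. totient e) + n" using a1 a2 a3 by linarith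
  have "cnt n 2 = n + 1" "cnt n 1 = 1" using cnt_eq[OF n, of 2] cnt_eq[OF n, of 1] ev by auto
  with * have "odeg n 2 = (\<Sum>e\<in>M. totient e)" by simp
  also have "\<dots> = (\<Sum>l\<in>{l. l dvd n div 2}. totient (l*2))"
    unfolding M_def using reidx[OF n, of 2 totient] ev by simp
  finally show ?thesis by (simp add: mult.commute)
qed

lemma degm:
  assumes n: "0 < n" and ev: "even n" and m: "m dvd n" "2 < m"
  shows "odeg n m + 2 * totient m = m + (if even m then n else 0) + (\<Sum>l\<in>{l. l dvd n div m}. totient (l*m))"
proof -
  define Dm where "Dm = {e. e dvd m}"
  define M where "M = {e. e dvd n \<and> m dvd e}"
  have fD: "finite Dm" unfolding Dm_def using m by (simp add: finite_divisors_nat)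
  have fM: "finite M" unfolding M_def using n by simp
  have cm: "cnt n m = totient m" using cnt_eq[OF n m(1)] m by simp
  have "{e. e dvd n \<and> e \<noteq> m \<and> (e dvd m \<or> m dvd e)} = (Dm - {m}) \<union> (M - {m})"
    unfolding Dm_def M_def using m by (auto intro: dvd_trans)
  then have "odeg n m = (\<Sum>e\<in>(Dm - {m}) \<union> (M - {m}). cnt n e)" using odeg_sum[OF n ev] by simp
  also have "\<dots> = (\<Sum>e\<in>Dm - {m}. cnt n e) + (\<Sum>e\<in>M - {m}. cnt n e)"
    using fD fM by (intro sum.union_disjoint) (auto simp: Dm_def M_def dvd_antisym)
  finally have d: "odeg n m = (\<Sum>e\<in>Dm - {m}. cnt n e) + (\<Sum>e\<in>M - {m}. cnt n e)" .
  have s1: "(\<Sum>e\<in>Dm - {m}. cnt n e) + cnt n m = (\<Sum>e\<in>Dm. cnt n e)"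
    using fD by (subst sum.remove[of Dm m]) (auto simp: Dm_def)
  have s2: "(\<Sum>e\<in>M - {m}. cnt n e) + cnt n m = (\<Sum>e\<in>M. cnt n e)"
    using fM m by (subst sum.remove[of M m]) (auto simp: M_def)
  have "(\<Sum>e\<in>Dm. cnt n e) = (\<Sum>e\<in>Dm. totient e + (if e = 2 then n else 0))"
    using n m by (intro sum.cong refl cnt_eq[OF n]) (auto simp: Dm_def intro: dvd_trans)
  also have "\<dots> = m + (if even m then n else 0)"
    using fD by (simp add: sum.distrib Dm_def totient_divisor_sum)
  finally have s3: "(\<Sum>e\<in>Dm. cnt n e) = m + (if even m then n else 0)" .
  have "(\<Sum>e\<in>M. cnt n e) = (\<Sum>e\<in>M. totient e)"
  proof (intro sum.cong refl)
    fix e assume e: "e \<in> M"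
    then have "e dvd n" "m dvd e" unfolding M_def by auto
    then have "m \<le> e" using n by (metis dvd_imp_le dvd_0_left_iff not_gr0)
    then show "cnt n e = totient e" using e m cnt_eq[OF n, of e] unfolding M_def by auto
  qed
  also have "\<dots> = (\<Sum>l\<in>{l. l dvd n div m}. totient (l*m))"
    unfolding M_def using reidx[OF n m(1), of totient] m by simp
  finally have s4: "(\<Sum>e\<in>M. cnt n e) = (\<Sum>l\<in>{l. l dvd n div m}. totient (l*m))" .
  show ?thesis using d s1 s2 s3 s4 cm by linarith
qed




theorem mainTheorem20:
  fixes n :: nat
  assumes "n \<ge> 3" and "even n"
  shows "real (card (od_edges (dihedral n))) =
    (1/2) * (2 * real n - 1
      + (real n + 1) * (\<Sum>l\<in>{l. l dvd n div 2}. real (totient (2 * l)))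
      + (\<Sum>m\<in>{m. m dvd n \<and> m > 1 \<and> odd m}.
           (real m - 2 * real (totient m)
            + (\<Sum>l\<in>{l. l dvd n div m}. real (totient (l * m)))) * real (totient m))
      + (\<Sum>m\<in>{m. m dvd n \<and> m > 2 \<and> even m}.
           (real n + real m - 2 * real (totient m)
            + (\<Sum>l\<in>{l. l dvd n div m}. real (totient (l * m)))) * real (totient m)))"
proof -
  have n: "0 < n" using assms(1) by simp
  note ev = assms(2)
  define Od where "Od = {m. m dvd n \<and> m > 1 \<and> odd m}"
  define Ev where "Ev = {m. m dvd n \<and> m > 2 \<and> even m}"
  define F where "F = (\<lambda>d. real (cnt n d * odeg n d))"
  have fO: "finite Od" unfolding Od_def using n by simp
  have fE: "finite Ev" unfolding Ev_def using n by simp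
  have D: "{d. d dvd n} = insert 1 (insert 2 (Od \<union> Ev))"
  proof -
    have nz: "\<And>x. x dvd n \<Longrightarrow> x \<noteq> 0" using n by auto
    show ?thesis unfolding Od_def Ev_def using ev nz by fastforce
  qed
  have "real (2 * card (od_edges (dihedral n))) = (\<Sum>d\<in>{d. d dvd n}. F d)"
    unfolding F_def edges_sum[OF n ev] by simp
  also have "\<dots> = F 1 + (F 2 + ((\<Sum>m\<in>Od. F m) + (\<Sum>m\<in>Ev. F m)))"
  proof -
    have "(\<Sum>m\<in>Od \<union> Ev. F m) = (\<Sum>m\<in>Od. F m) + (\<Sum>m\<in>Ev. F m)"
      using fO fE by (intro sum.union_disjoint) (auto simp: Od_def Ev_def)
    then show ?thesis unfolding D using fO fE by (simp add: Od_def Ev_def)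
  qed
  finally have main: "2 * real (card (od_edges (dihedral n))) = F 1 + (F 2 + ((\<Sum>m\<in>Od. F m) + (\<Sum>m\<in>Ev. F m)))"
    by simp
  have F1: "F 1 = 2 * real n - 1"
    unfolding F_def using cnt_eq[OF n, of 1] deg1[OF n ev] n by (simp add: of_nat_diff)
  have F2: "F 2 = (real n + 1) * (\<Sum>l\<in>{l. l dvd n div 2}. real (totient (2 * l)))"
    unfolding F_def using cnt_eq[OF n, of 2] deg2[OF n ev] ev by (simp add: of_nat_sum algebra_simps)
  have FO: "(\<Sum>m\<in>Od. F m) = (\<Sum>m\<in>Od. (real m - 2 * real (totient m)
            + (\<Sum>l\<in>{l. l dvd n div m}. real (totient (l * m)))) * real (totient m))"
  proof (rule sum.cong[OF refl])
    fix m assume m: "m \<in> Od"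
    then have md0: "m dvd n" "1 < m" "odd m" unfolding Od_def by auto
    then have "2 < m" using md0(2,3) by (cases "m = 2") auto
    with md0 have md: "m dvd n" "2 < m" "odd m" by auto
    have c: "cnt n m = totient m" using cnt_eq[OF n md(1)] md by simp
    have "odeg n m + 2 * totient m = m + (\<Sum>l\<in>{l. l dvd n div m}. totient (l*m))"
      using degm[OF n ev md(1,2)] md by simp
    then have "real (odeg n m) = real m - 2 * real (totient m) + (\<Sum>l\<in>{l. l dvd n div m}. real (totient (l*m)))"
    proof -
      assume h: "odeg n m + 2 * totient m = m + (\<Sum>l\<in>{l. l dvd n div m}. totient (l*m))"
      have "real (odeg n m + 2 * totient m) = real (m + (\<Sum>l\<in>{l. l dvd n div m}. totient (l*m)))"
        using h by (simp only:)
      then show ?thesis by (simp add: of_nat_sum)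
    qed
    then show "F m = (real m - 2 * real (totient m)
            + (\<Sum>l\<in>{l. l dvd n div m}. real (totient (l * m)))) * real (totient m)"
      unfolding F_def c by simp
  qed
  have FE: "(\<Sum>m\<in>Ev. F m) = (\<Sum>m\<in>Ev. (real n + real m - 2 * real (totient m)
            + (\<Sum>l\<in>{l. l dvd n div m}. real (totient (l * m)))) * real (totient m))"
  proof (rule sum.cong[OF refl])
    fix m assume m: "m \<in> Ev"
    then have md: "m dvd n" "2 < m" "even m" unfolding Ev_def by auto
    have c: "cnt n m = totient m" using cnt_eq[OF n md(1)] md by simp
    have "odeg n m + 2 * totient m = m + n + (\<Sum>l\<in>{l. l dvd n div m}. totient (l*m))"
      using degm[OF n ev md(1,2)] md by simp
    then have "real (odeg n m) = real n + real m - 2 * real (totient m) + (\<Sum>l\<in>{l. l dvd n div m}. real (totient (l*m)))"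
    proof -
      assume h: "odeg n m + 2 * totient m = m + n + (\<Sum>l\<in>{l. l dvd n div m}. totient (l*m))"
      have "real (odeg n m + 2 * totient m) = real (m + n + (\<Sum>l\<in>{l. l dvd n div m}. totient (l*m)))"
        using h by (simp only:)
      then show ?thesis by (simp add: of_nat_sum)
    qed
    then show "F m = (real n + real m - 2 * real (totient m)
            + (\<Sum>l\<in>{l. l dvd n div m}. real (totient (l * m)))) * real (totient m)"
      unfolding F_def c by simp
  qed
  show ?thesis using main F1 F2 FO FE unfolding Od_def Ev_def by simp
qed


end
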